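(* Let $a,\omega\in\mathbb{R}$ and on $T^*\mathbb{R}^2$ with coordinates ordered as $(p_x,p_y,x,y)$ consider \[H_{\mathrm{SK}}=\tfrac12(p_x^2+p_y^2)+\tfrac{\omega}{2}(x^2+y^2)+axy^2+\tfrac a3x^3,\qquad F_{\mathrm{SK}}=p_xp_y+\omega xy+ax^2y+\tfrac a3y^3.\] Let $X$ be the vector field with components $X^{p_x}=-\frac{xp_x+yp_y}{\sqrt2}$, $X^{p_y}=-\frac{yp_x+xp_y}{\sqrt2}$, $X^x=X^y=0$, let $P_1=\mathcal L_XP_0=-(J_XP_0+P_0J_X^{\top})$ ($J_X$ the Jacobian matrix of $X$), $N=P_1P_0^{-1}$ and $N^*=P_0^{-1}P_1$. Then, with covectors written as column vectors of partial derivatives in the order $(p_x,p_y,x,y)$, \[N^*dH_{\mathrm{SK}}=\tfrac{x}{\sqrt2}\,dH_{\mathrm{SK}}+\tfrac{y}{\sqrt2}\,dF_{\mathrm{SK}},\qquad N^*dF_{\mathrm{SK}}=\tfrac{y}{\sqrt2}\,dH_{\mathrm{SK}}+\tfrac{x}{\sqrt2}\,dF_{\mathrm{SK}},\] so that the control matrix has eigenvalues $u_1=\frac{x+y}{\sqrt2}$, $u_2=\frac{x-y}{\sqrt2}$. Moreover, with $v_1=\frac{p_x+p_y}{\sqrt2}$, $v_2=\frac{p_x-p_y}{\sqrt2}$, one has $p_x\,dx+p_y\,dy=v_1\,du_1+v_2\,du_2$ and \[H_{\mathrm{SK}}=H_1+H_2,\qquad F_{\mathrm{SK}}=H_1-H_2,\qquad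 H_i=\tfrac12v_i^2+\tfrac{\omega}{2}u_i^2+\tfrac{\sqrt2\,a}{3}u_i^3\ (i=1,2),\] so that the Hamilton equations of $H_{\mathrm{SK}}$ split into the two decoupled systems $\ddot u_i+\omega u_i+\sqrt2\,a\,u_i^2=0$, $i=1,2$.
   Context: $P_0$ is the canonical Poisson tensor on $T^*\mathbb{R}^2$, which in the ordering $(p_x,p_y,x,y)$ is the matrix $\begin{pmatrix}0&-I_2\\ I_2&0\end{pmatrix}$, corresponding to the bracket with $\{x,p_x\}_0=\{y,p_y\}_0=1$. *)

theory Defs
  imports "HOL-Analysis.Analysis"
begin

type_synonym state = "real^4"

definition px :: "state \<Rightarrow> real" where "px z = z $ 1"
definition py :: "state \<Rightarrow> real" where "py z = z $ 2"
definition qx :: "state \<Rightarrow> real" where "qx z = z $ 3"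
definition qy :: "state \<Rightarrow> real" where "qy z = z $ 4"

definition grad :: "(state \<Rightarrow> real) \<Rightarrow> state \<Rightarrow> real^4" where
  "grad f z = (\<chi> i. frechet_derivative f (at z) (axis i 1))"

text \<open>Canonical Poisson tensor P0 = [[0,-I],[I,0]].\<close>
definition P0 :: "real^4^4" where
  "P0 = (\<chi> i j. if i = 1 \<and> j = 3 then -1 else if i = 2 \<and> j = 4 then -1
               else if i = 3 \<and> j = 1 then 1 else if i = 4 \<and> j = 2 then 1 else 0)"

definition H_SK :: "real \<Rightarrow> real \<Rightarrow> state \<Rightarrow> real" where
  "H_SK a \<omega> z = (px z ^ 2 + py z ^ 2) / 2 + \<omega> / 2 * (qx z ^ 2 + qy z ^ 2)
                 + a * qx z * qy z ^ 2 + a / 3 * qx z ^ 3"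

definition F_SK :: "real \<Rightarrow> real \<Rightarrow> state \<Rightarrow> real" where
  "F_SK a \<omega> z = px z * py z + \<omega> * qx z * qy z + a * qx z ^ 2 * qy z + a / 3 * qy z ^ 3"

definition Xf :: "state \<Rightarrow> real^4" where
  "Xf z = (\<chi> i. if i = 1 then - (qx z * px z + qy z * py z) / sqrt 2
              else if i = 2 then - (qy z * px z + qx z * py z) / sqrt 2
              else 0)"

text \<open>J_X: Jacobian matrix of X, (J_X)_{ij} = dX^i / dz_j.\<close>
definition JX :: "state \<Rightarrow> real^4^4" where
  "JX z = jacobian Xf (at z)"

text \<open>P1 = L_X P0 = -(J_X P0 + P0 J_X^T).\<close>
definition P1 :: "state \<Rightarrow> real^4^4" where
  "P1 z = - (JX z ** P0 + P0 ** transpose (JX z))"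

definition Nrec :: "state \<Rightarrow> real^4^4" where
  "Nrec z = P1 z ** matrix_inv P0"

definition Nstar :: "state \<Rightarrow> real^4^4" where
  "Nstar z = matrix_inv P0 ** P1 z"

definition u1 :: "state \<Rightarrow> real" where "u1 z = (qx z + qy z) / sqrt 2"
definition u2 :: "state \<Rightarrow> real" where "u2 z = (qx z - qy z) / sqrt 2"
definition v1 :: "state \<Rightarrow> real" where "v1 z = (px z + py z) / sqrt 2"
definition v2 :: "state \<Rightarrow> real" where "v2 z = (px z - py z) / sqrt 2"

definition Hi :: "real \<Rightarrow> real \<Rightarrow> real \<Rightarrow> real \<Rightarrow> real" where
  "Hi a \<omega> u v = v ^ 2 / 2 + \<omega> / 2 * u ^ 2 + sqrt 2 * a / 3 * u ^ 3"

definition H1 :: "real \<Rightarrow> real \<Rightarrow> state \<Rightarrow> real" where "H1 a \<omega> z = Hi a \<omega> (u1 z) (v1 z)"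
definition H2 :: "real \<Rightarrow> real \<Rightarrow> state \<Rightarrow> real" where "H2 a \<omega> z = Hi a \<omega> (u2 z) (v2 z)"

text \<open>Control matrix: N* (dH, dF) = C (dH, dF).\<close>
definition control :: "state \<Rightarrow> real^2^2" where
  "control z = (\<chi> i j. if i = j then qx z / sqrt 2 else qy z / sqrt 2)"

end

theory Submission imports Defs begin

lemma ss: "sqrt 2 * (sqrt 2 * (x::real)) = 2 * x" by (simp add: mult.assoc[symmetric])

lemma s0: "sqrt (2::real) \<noteq> 0" by simp

lemma d_nth[derivative_intros]: "((\<lambda>z::real^'n. z $ i) has_derivative (\<lambda>h. h $ i)) F"
  by (rule bounded_linear_imp_has_derivative) (rule bounded_linear_vec_nth)

lemma axis_nth': "axis i (1::real) $ j = (if j = i then 1 else 0)"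
  by (simp add: axis_def)

lemma H_der: "(H_SK a w has_derivative (\<lambda>h. z$1 * h$1 + z$2 * h$2
     + (w * z$3 + a * z$4^2 + a * z$3^2) * h$3 + (w * z$4 + 2*a*z$3*z$4) * h$4)) (at z)"
  unfolding H_SK_def px_def py_def qx_def qy_def
  by (rule derivative_eq_intros refl | simp)+ (auto simp: field_simps s0 power2_eq_square intro!: ext)

lemma F_der: "(F_SK a w has_derivative (\<lambda>h. z$2 * h$1 + z$1 * h$2
     + (w * z$4 + 2*a*z$3*z$4) * h$3 + (w * z$3 + a * z$4^2 + a * z$3^2) * h$4)) (at z)"
  unfolding F_SK_def px_def py_def qx_def qy_def
  by (rule derivative_eq_intros refl | simp)+ (auto simp: field_simps s0 power2_eq_square intro!: ext)

lemma gradH: "grad (H_SK a w) z = (\<chi> i. if i = 1 then z$1 else if i = 2 then z$2 else if i = 3 then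
   w * z$3 + a * z$4^2 + a * z$3^2 else w * z$4 + 2*a*z$3*z$4)"
  unfolding grad_def frechet_derivative_at[OF H_der, symmetric]
  by (auto simp: vec_eq_iff forall_4 axis_nth')

lemma gradF: "grad (F_SK a w) z = (\<chi> i. if i = 1 then z$2 else if i = 2 then z$1 else if i = 3 then
   w * z$4 + 2*a*z$3*z$4 else w * z$3 + a * z$4^2 + a * z$3^2)"
  unfolding grad_def frechet_derivative_at[OF F_der, symmetric]
  by (auto simp: vec_eq_iff forall_4 axis_nth')

lemma Xf_eq: "Xf = (\<lambda>z. (- (z$3 * z$1 + z$4 * z$2) / sqrt 2) *\<^sub>R axis 1 1 + (- (z$4 * z$1 + z$3 * z$2) / sqrt 2) *\<^sub>R axis 2 1)"
  by (auto simp: Xf_def vec_eq_iff forall_4 axis_nth' px_def py_def qx_def qy_def)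

lemma Xf_der: "(Xf has_derivative (\<lambda>h. (- (h$3 * z$1 + z$3 * h$1 + h$4 * z$2 + z$4 * h$2) / sqrt 2) *\<^sub>R axis 1 1 + (- (h$4 * z$1 + z$4 * h$1 + h$3 * z$2 + z$3 * h$2) / sqrt 2) *\<^sub>R axis 2 1)) (at z)"
  unfolding Xf_eq
  by (rule derivative_eq_intros refl | simp)+ (auto simp: vec_eq_iff axis_nth' field_simps s0 intro!: ext)

lemma JX_eq: "JX z = (\<chi> i j. if i = 1 then (if j = 1 then - z$3 / sqrt 2 else if j = 2 then - z$4 / sqrt 2 else if j = 3 then - z$1 / sqrt 2 else - z$2 / sqrt 2)
   else if i = 2 then (if j = 1 then - z$4 / sqrt 2 else if j = 2 then - z$3 / sqrt 2 else if j = 3 then - z$2 / sqrt 2 else - z$1 / sqrt 2) else 0)"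
  unfolding JX_def jacobian_def frechet_derivative_at[OF Xf_der, symmetric] matrix_def
  by (auto simp: vec_eq_iff forall_4 axis_nth')

lemma P0inv: "matrix_inv P0 = - P0"
proof -
  have 1: "P0 ** (- P0) = mat 1 \<and> (- P0) ** P0 = mat 1"
    by (simp add: P0_def matrix_matrix_mult_def vec_eq_iff forall_4 sum_4 mat_def)
  have "\<And>A. P0 ** A = mat 1 \<and> A ** P0 = mat 1 \<Longrightarrow> A = - P0"
    by (metis 1 matrix_mul_assoc matrix_mul_lid matrix_mul_rid)
  then show ?thesis unfolding matrix_inv_def using someI[of "\<lambda>A. P0 ** A = mat 1 \<and> A ** P0 = mat 1", OF 1] by blast
qed

lemma Nstar_eq: "Nstar z = (\<chi> i j. if (i = 1 \<or> i = 3) \<and> j = i then z$3 / sqrt 2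
   else if (i = 2 \<or> i = 4) \<and> j = i then z$3 / sqrt 2
   else if (i = 1 \<and> j = 2) \<or> (i = 2 \<and> j = 1) \<or> (i = 3 \<and> j = 4) \<or> (i = 4 \<and> j = 3) then z$4 / sqrt 2 else 0)"
  unfolding Nstar_def P1_def P0inv JX_eq
  by (simp add: P0_def matrix_matrix_mult_def vec_eq_iff forall_4 sum_4 transpose_def)

lemma grad_lin: assumes "(f has_derivative (\<lambda>h. c1 * h$1 + c2 * h$2 + c3 * h$3 + c4 * h$4)) (at z)"
  shows "grad f z = (\<chi> i. if i = 1 then c1 else if i = 2 then c2 else if i = 3 then c3 else c4)"
  unfolding grad_def frechet_derivative_at[OF assms, symmetric]
  by (auto simp: vec_eq_iff forall_4 axis_nth')

lemma gqx: "grad qx z = (\<chi> i. if i = 1 then 0 else if i = 2 then 0 else if i = 3 then 1 else 0)"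
  by (rule grad_lin) (unfold qx_def, rule derivative_eq_intros refl | simp)+
lemma gqy: "grad qy z = (\<chi> i. if i = 1 then 0 else if i = 2 then 0 else if i = 3 then 0 else 1)"
  by (rule grad_lin) (unfold qy_def, rule derivative_eq_intros refl | simp)+
lemma gu1: "grad u1 z = (\<chi> i. if i = 1 then 0 else if i = 2 then 0 else if i = 3 then 1 / sqrt 2 else 1 / sqrt 2)"
  apply (rule grad_lin) unfolding u1_def qx_def qy_def by (rule derivative_eq_intros refl)+ (auto simp: field_simps s0 intro!: ext)
lemma gu2: "grad u2 z = (\<chi> i. if i = 1 then 0 else if i = 2 then 0 else if i = 3 then 1 / sqrt 2 else - 1 / sqrt 2)"
  apply (rule grad_lin) unfolding u2_def qx_def qy_def by (rule derivative_eq_intros refl)+ (auto simp: field_simps s0 intro!: ext)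

lemma s3: "sqrt 2 ^ 3 = 2 * sqrt (2::real)"
  by (simp add: power3_eq_cube)

lemma comp_der:
  assumes "\<forall>t. (\<gamma> has_vector_derivative (P0 *v grad (H_SK a w) (\<gamma> t))) (at t)"
  shows "((\<lambda>s. \<gamma> s $ i) has_real_derivative (P0 *v grad (H_SK a w) (\<gamma> t)) $ i) (at t)"
proof -
  have "(\<gamma> has_derivative (\<lambda>x. x *\<^sub>R (P0 *v grad (H_SK a w) (\<gamma> t)))) (at t)"
    using assms by (simp add: has_vector_derivative_def)
  from bounded_linear.has_derivative[OF bounded_linear_vec_nth this, of i]
  show ?thesis unfolding has_field_derivative_def
    by (rule has_derivative_eq_rhs) (auto simp: mult.commute)
qed

lemma P0g: "P0 *v grad (H_SK a w) z = (\<chi> i. if i = 1 then - (w * z$3 + a * z$4^2 + a * z$3^2)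
   else if i = 2 then - (w * z$4 + 2*a*z$3*z$4) else if i = 3 then z$1 else z$2)"
  by (simp add: gradH P0_def matrix_vector_mult_def vec_eq_iff forall_4 sum_4)

theorem mainTheorem4:
  fixes a \<omega> :: real
  shows
    "(\<forall>z. Nstar z *v grad (H_SK a \<omega>) z
          = (qx z / sqrt 2) *\<^sub>R grad (H_SK a \<omega>) z + (qy z / sqrt 2) *\<^sub>R grad (F_SK a \<omega>) z)
   \<and> (\<forall>z. Nstar z *v grad (F_SK a \<omega>) z
          = (qy z / sqrt 2) *\<^sub>R grad (H_SK a \<omega>) z + (qx z / sqrt 2) *\<^sub>R grad (F_SK a \<omega>) z)
   \<and> (\<forall>z. \<forall>l. det (mat l - control z) = 0 \<longleftrightarrow> l = u1 z \<or> l = u2 z)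
   \<and> (\<forall>z. px z *\<^sub>R grad qx z + py z *\<^sub>R grad qy z
          = v1 z *\<^sub>R grad u1 z + v2 z *\<^sub>R grad u2 z)
   \<and> (\<forall>z. H_SK a \<omega> z = H1 a \<omega> z + H2 a \<omega> z)
   \<and> (\<forall>z. F_SK a \<omega> z = H1 a \<omega> z - H2 a \<omega> z)
   \<and> (\<forall>\<gamma> :: real \<Rightarrow> real^4.
        (\<forall>t. (\<gamma> has_vector_derivative (P0 *v grad (H_SK a \<omega>) (\<gamma> t))) (at t)) \<longrightarrow>
        (\<forall>u \<in> {u1, u2}. \<exists>w'. \<forall>t.
            ((\<lambda>s. u (\<gamma> s)) has_real_derivative w' t) (at t) \<and>
            (w' has_real_derivative (- (\<omega> * u (\<gamma> t) + sqrt 2 * a * u (\<gamma> t) ^ 2))) (at t)))"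
proof (intro conjI allI impI)
  fix z
  show "Nstar z *v grad (H_SK a \<omega>) z
          = (qx z / sqrt 2) *\<^sub>R grad (H_SK a \<omega>) z + (qy z / sqrt 2) *\<^sub>R grad (F_SK a \<omega>) z"
    by (simp add: Nstar_eq gradH gradF matrix_vector_mult_def vec_eq_iff forall_4 sum_4 qx_def qy_def field_simps s0)
  show "Nstar z *v grad (F_SK a \<omega>) z
          = (qy z / sqrt 2) *\<^sub>R grad (H_SK a \<omega>) z + (qx z / sqrt 2) *\<^sub>R grad (F_SK a \<omega>) z"
    by (simp add: Nstar_eq gradH gradF matrix_vector_mult_def vec_eq_iff forall_4 sum_4 qx_def qy_def field_simps s0)
  show "px z *\<^sub>R grad qx z + py z *\<^sub>R grad qy z
          = v1 z *\<^sub>R grad u1 z + v2 z *\<^sub>R grad u2 z"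
    by (simp add: gqx gqy gu1 gu2 v1_def v2_def vec_eq_iff forall_4 field_simps s0)
  show "H_SK a \<omega> z = H1 a \<omega> z + H2 a \<omega> z"
    by (simp add: H_SK_def H1_def H2_def Hi_def u1_def u2_def v1_def v2_def power_divide s3 field_simps s0)
       (simp add: power2_eq_square power3_eq_cube algebra_simps)
  show "F_SK a \<omega> z = H1 a \<omega> z - H2 a \<omega> z"
    by (simp add: F_SK_def H1_def H2_def Hi_def u1_def u2_def v1_def v2_def power_divide s3 field_simps s0)
       (simp add: power2_eq_square power3_eq_cube algebra_simps)
next
  fix z l
  have "det (mat l - control z) = (l - u1 z) * (l - u2 z)"
    by (simp add: det_2 control_def mat_def u1_def u2_def field_simps s0 power2_eq_square)
  then show "det (mat l - control z) = 0 \<longleftrightarrow> l = u1 z \<or> l = u2 z" by simp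
next
  fix \<gamma> :: "real \<Rightarrow> real^4"
  assume A: "\<forall>t. (\<gamma> has_vector_derivative (P0 *v grad (H_SK a \<omega>) (\<gamma> t))) (at t)"
  note D = comp_der[OF A, unfolded P0g]
  have "\<exists>w'. \<forall>t. ((\<lambda>s. u1 (\<gamma> s)) has_real_derivative w' t) (at t) \<and>
            (w' has_real_derivative (- (\<omega> * u1 (\<gamma> t) + sqrt 2 * a * u1 (\<gamma> t) ^ 2))) (at t)"
  proof (intro exI allI conjI)
    fix t
    show "((\<lambda>s. u1 (\<gamma> s)) has_real_derivative (\<gamma> t $ 1 + \<gamma> t $ 2) / sqrt 2) (at t)"
      unfolding u1_def qx_def qy_def
      by (rule derivative_eq_intros D refl)+ (simp, simp add: field_simps s0)
    show "((\<lambda>t. (\<gamma> t $ 1 + \<gamma> t $ 2) / sqrt 2) has_real_derivative (- (\<omega> * u1 (\<gamma> t) + sqrt 2 * a * u1 (\<gamma> t) ^ 2))) (at t)"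
      unfolding u1_def qx_def qy_def
      by (rule derivative_eq_intros D refl)+ (simp add: power_divide, simp add: field_simps s0 power2_eq_square ss)
  qed
  moreover
  have "\<exists>w'. \<forall>t. ((\<lambda>s. u2 (\<gamma> s)) has_real_derivative w' t) (at t) \<and>
            (w' has_real_derivative (- (\<omega> * u2 (\<gamma> t) + sqrt 2 * a * u2 (\<gamma> t) ^ 2))) (at t)"
  proof (intro exI allI conjI)
    fix t
    show "((\<lambda>s. u2 (\<gamma> s)) has_real_derivative (\<gamma> t $ 1 - \<gamma> t $ 2) / sqrt 2) (at t)"
      unfolding u2_def qx_def qy_def
      by (rule derivative_eq_intros D refl)+ (simp, simp add: field_simps s0)
    show "((\<lambda>t. (\<gamma> t $ 1 - \<gamma> t $ 2) / sqrt 2) has_real_derivative (- (\<omega> * u2 (\<gamma> t) + sqrt 2 * a * u2 (\<gamma> t) ^ 2))) (at t)"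
      unfolding u2_def qx_def qy_def
      by (rule derivative_eq_intros D refl)+ (simp add: power_divide, simp add: field_simps s0 power2_eq_square ss)
  qed
  ultimately show "\<forall>u \<in> {u1, u2}. \<exists>w'. \<forall>t.
            ((\<lambda>s. u (\<gamma> s)) has_real_derivative w' t) (at t) \<and>
            (w' has_real_derivative (- (\<omega> * u (\<gamma> t) + sqrt 2 * a * u (\<gamma> t) ^ 2))) (at t)"
    by auto
qed

end
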